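(* Let $E$ be a finite set and $V \subset \mathbb R^E$ a linear subspace defining an oriented matroid $M$. If $G \subset E$ is an acyclic flat of $M$, then \[ \mathcal Y_V \cap \big((\mathbb P^1_{\mathbb R})^G \times \infty^{E \setminus G}\big) = \mathcal Y_{\pi_G(V)} \times \infty^{E \setminus G}. \]
   Context: $\mathbb P^1_{\mathbb R} = \mathbb R\cup\{\infty\}$. For a linear subspace $W \subset \mathbb R^S$ ($S$ finite), $\mathcal Y_W$ denotes the closure of $W \cap \mathbb R_{\geq 0}^S$ in $(\mathbb P^1_{\mathbb R})^S$ in the analytic topology. $\pi_G : \mathbb R^E \to \mathbb R^G$ is the coordinate projection. $(\mathbb P^1_{\mathbb R})^G \times \infty^{E\setminus G}$ is the set of points of $(\mathbb P^1_{\mathbb R})^E$ with all coordinates in $E\setminus G$ equal to $\infty$. Flats of $M$ are the zero sets $\{i: v_i=0\}$ of $v \in V$; a flat $G$ is acyclic if some $v \in V$ has $v_i = 0$ for $i \in G$ and $v_i > 0$ for $i \notin G$. *)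

theory Defs
  imports "HOL-Analysis.Analysis"
begin

text \<open>The real projective line P^1_R = R \<union> {\<infinity>} is modelled by the type real option:
  Some a is the real number a and None is the point \<infinity>.
  A vector of R^S (S a finite subset of the ground type) is a function into real that is 0
  outside S; a point of (P^1_R)^S is a function into real option that is undefined outside S.\<close>

type_synonym p1 = "real option"

abbreviation p1_infty :: p1 where "p1_infty \<equiv> None"

fun p1_tendsto :: "(nat \<Rightarrow> real) \<Rightarrow> p1 \<Rightarrow> bool" where
  "p1_tendsto f (Some a) = (f \<longlonglongrightarrow> a)"
| "p1_tendsto f None = filterlim (\<lambda>n. \<bar>f n\<bar>) at_top sequentially"

text \<open>Y_W: closure of W \<inter> R_{\<ge>0}^S inside (P^1_R)^S (a finite product of metrizable spaces,
  so the closure is the sequential closure; convergence in a finite product is coordinatewise).\<close>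
definition Ycl :: "'e set \<Rightarrow> ('e \<Rightarrow> real) set \<Rightarrow> ('e \<Rightarrow> p1) set" where
  "Ycl S W = {x. (\<forall>i. i \<notin> S \<longrightarrow> x i = undefined) \<and>
      (\<exists>w :: nat \<Rightarrow> 'e \<Rightarrow> real. (\<forall>n. w n \<in> W \<and> (\<forall>i\<in>S. 0 \<le> w n i)) \<and>
          (\<forall>i\<in>S. p1_tendsto (\<lambda>n. w n i) (x i)))}"

definition lin_subspace :: "'e set \<Rightarrow> ('e \<Rightarrow> real) set \<Rightarrow> bool" where
  "lin_subspace E V \<longleftrightarrow> (\<forall>v\<in>V. \<forall>i. i \<notin> E \<longrightarrow> v i = 0) \<and> (\<lambda>i. 0) \<in> V \<and>
     (\<forall>v\<in>V. \<forall>w\<in>V. (\<lambda>i. v i + w i) \<in> V) \<and> (\<forall>c. \<forall>v\<in>V. (\<lambda>i. c * v i) \<in> V)"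

definition proj :: "'e set \<Rightarrow> ('e \<Rightarrow> real) \<Rightarrow> ('e \<Rightarrow> real)" where
  "proj G v = (\<lambda>i. if i \<in> G then v i else 0)"

definition is_flat :: "'e set \<Rightarrow> ('e \<Rightarrow> real) set \<Rightarrow> 'e set \<Rightarrow> bool" where
  "is_flat E V G \<longleftrightarrow> (\<exists>v\<in>V. G = {i\<in>E. v i = 0})"

definition is_acyclic_flat :: "'e set \<Rightarrow> ('e \<Rightarrow> real) set \<Rightarrow> 'e set \<Rightarrow> bool" where
  "is_acyclic_flat E V G \<longleftrightarrow> is_flat E V G \<and>
     (\<exists>v\<in>V. (\<forall>i\<in>G. v i = 0) \<and> (\<forall>i\<in>E - G. v i > 0))"

definition infty_outside :: "'e set \<Rightarrow> 'e set \<Rightarrow> ('e \<Rightarrow> p1) set" where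
  "infty_outside E G = {x. (\<forall>i. i \<notin> E \<longrightarrow> x i = undefined) \<and> (\<forall>i\<in>E - G. x i = None)}"

text \<open>A \<times> \<infinity>^(E-G) for A \<subseteq> (P^1_R)^G, as a subset of (P^1_R)^E.\<close>
definition times_infty :: "'e set \<Rightarrow> 'e set \<Rightarrow> ('e \<Rightarrow> p1) set \<Rightarrow> ('e \<Rightarrow> p1) set" where
  "times_infty E G A = {x. (\<lambda>i. if i \<in> G then x i else undefined) \<in> A \<and>
      (\<forall>i\<in>E - G. x i = None) \<and> (\<forall>i. i \<notin> E \<longrightarrow> x i = undefined)}"

end

theory Submission
  imports Defs
begin

theorem corollary3p4:
  fixes E G :: "'e set" and V :: "('e \<Rightarrow> real) set"
  assumes "finite E"
    and "lin_subspace E V"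
    and "G \<subseteq> E"
    and "is_acyclic_flat E V G"
  shows "Ycl E V \<inter> infty_outside E G = times_infty E G (Ycl G (proj G ` V))"
proof
  show "Ycl E V \<inter> infty_outside E G \<subseteq> times_infty E G (Ycl G (proj G ` V))"
  proof
    fix x assume "x \<in> Ycl E V \<inter> infty_outside E G"
    then obtain w where x1: "\<forall>i. i \<notin> E \<longrightarrow> x i = undefined"
      and w: "\<forall>n. w n \<in> V \<and> (\<forall>i\<in>E. 0 \<le> w n i)" "\<forall>i\<in>E. p1_tendsto (\<lambda>n. w n i) (x i)"
      and xinf: "\<forall>i\<in>E - G. x i = None"
      unfolding Ycl_def infty_outside_def by blast
    have "(\<lambda>i. if i \<in> G then x i else undefined) \<in> Ycl G (proj G ` V)"
      unfolding Ycl_def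
    proof (intro CollectI conjI exI[of _ "\<lambda>n. proj G (w n)"])
      show "\<forall>n. proj G (w n) \<in> proj G ` V \<and> (\<forall>i\<in>G. 0 \<le> proj G (w n) i)"
        using w(1) assms(3) by (auto simp: proj_def)
      show "\<forall>i\<in>G. p1_tendsto (\<lambda>n. proj G (w n) i) (if i \<in> G then x i else undefined)"
        using w(2) assms(3) by (auto simp: proj_def)
    qed auto
    then show "x \<in> times_infty E G (Ycl G (proj G ` V))"
      unfolding times_infty_def using x1 xinf by blast
  qed
next
  show "times_infty E G (Ycl G (proj G ` V)) \<subseteq> Ycl E V \<inter> infty_outside E G"
  proof
    fix x assume "x \<in> times_infty E G (Ycl G (proj G ` V))"
    then obtain u where x1: "\<forall>i. i \<notin> E \<longrightarrow> x i = undefined"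
      and xinf: "\<forall>i\<in>E - G. x i = None"
      and u: "\<forall>n. u n \<in> proj G ` V \<and> (\<forall>i\<in>G. 0 \<le> u n i)"
      and ut: "\<forall>i\<in>G. p1_tendsto (\<lambda>n. u n i) (x i)"
      unfolding times_infty_def Ycl_def by auto
    have "\<forall>n. \<exists>v. v \<in> V \<and> u n = proj G v" using u by blast
    then obtain v where v: "\<And>n. v n \<in> V" "\<And>n. u n = proj G (v n)" by metis
    obtain v0 where v0: "v0 \<in> V" "\<forall>i\<in>G. v0 i = 0" "\<forall>i\<in>E - G. v0 i > 0"
      using assms(4) unfolding is_acyclic_flat_def by blast
    define c where "c n = (\<Sum>j\<in>E - G. (real n + \<bar>v n j\<bar>) / v0 j)" for n
    define w where "w n = (\<lambda>i. v n i + c n * v0 i)" for n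
    have wV: "w n \<in> V" for n
    proof -
      have a: "\<forall>v\<in>V. \<forall>w\<in>V. (\<lambda>i. v i + w i) \<in> V" "\<forall>c. \<forall>v\<in>V. (\<lambda>i. c * v i) \<in> V"
        using assms(2) unfolding lin_subspace_def by blast+
      have "(\<lambda>i. c n * v0 i) \<in> V" using a(2) v0(1) by blast
      then show ?thesis using bspec[OF bspec[OF a(1) v(1)[of n]]] unfolding w_def by blast
    qed
    have wG: "w n i = u n i" if "i \<in> G" for n i
      using v0(2) that v(2) by (simp add: w_def proj_def)
    have wbig: "w n i \<ge> real n" if "i \<in> E - G" for n i
    proof -
      have fin: "finite (E - G)" using assms(1) by simp
      have "(real n + \<bar>v n i\<bar>) / v0 i \<le> c n"
        unfolding c_def
        by (rule member_le_sum[OF that _ fin]) (use v0(3) in \<open>auto intro!: divide_nonneg_pos\<close>)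
      then have "real n + \<bar>v n i\<bar> \<le> c n * v0 i"
        using v0(3) that by (simp add: pos_divide_le_eq)
      then show ?thesis unfolding w_def by linarith
    qed
    have "x \<in> Ycl E V" unfolding Ycl_def
    proof (intro CollectI conjI exI[of _ w])
      show "\<forall>n. w n \<in> V \<and> (\<forall>i\<in>E. 0 \<le> w n i)"
      proof (intro allI conjI ballI)
        fix n i assume "i \<in> E"
        show "0 \<le> w n i"
        proof (cases "i \<in> G")
          case True then show ?thesis using wG u by simp
        next
          case False then show ?thesis using wbig[of i n] \<open>i \<in> E\<close> by force
        qed
      qed (rule wV)
      show "\<forall>i\<in>E. p1_tendsto (\<lambda>n. w n i) (x i)"
      proof
        fix i assume "i \<in> E"
        show "p1_tendsto (\<lambda>n. w n i) (x i)"
        proof (cases "i \<in> G")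
          case True then show ?thesis using wG ut by simp
        next
          case False
          then have "x i = None" using xinf \<open>i \<in> E\<close> by blast
          moreover have "filterlim (\<lambda>n. \<bar>w n i\<bar>) at_top sequentially"
          proof (rule filterlim_at_top_mono[OF filterlim_real_sequentially])
            show "\<forall>\<^sub>F n in sequentially. real n \<le> \<bar>w n i\<bar>"
              using wbig[of i] False \<open>i \<in> E\<close> by (intro always_eventually allI) (meson DiffI abs_ge_self order_trans)
          qed
          ultimately show ?thesis by simp
        qed
      qed
    qed (use x1 in auto)
    moreover have "x \<in> infty_outside E G" unfolding infty_outside_def using x1 xinf by blast
    ultimately show "x \<in> Ycl E V \<inter> infty_outside E G" by blast
  qed
qed

end
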